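(* Let $i_1,\dots,i_r$ be integers with $\sum_{s=1}^r i_s=1$ and let $\mathbf{m}=(m_1,\dots,m_r)\in\mathbb{Z}^r$ with $\sum_{s=1}^r m_s=0$. Put $k_s=i_s+m_s(q-1)$ and let $\phi^{\mathbf m}:A\to K\{\tau\}$ be determined by $$\phi^{\mathbf m}_t=(-1)^{r-1}\,(\tau-(-t)^{k_r})(\tau-(-t)^{k_{r-1}})\cdots(\tau-(-t)^{k_1}).$$ Then $\phi^{\mathbf m}$ is a rank-$r$ Drinfeld module over $K$ with $[\phi^{\mathbf m}]\in\mathscr{D}(K,r,t)$, and its mod $t$ representation $\bar\rho_{\phi^{\mathbf m},t}$ is isomorphic to an upper triangular representation with diagonal characters $\chi_t^{i_1},\chi_t^{i_2},\dots,\chi_t^{i_r}$ (in this order).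
   Context: $p$ prime, $q$ a power of $p$, $A=\mathbb{F}_q[t]$, $F=\mathbb{F}_q(t)$, $K$ a finite extension of $F$, $r\ge1$. $K\{\tau\}$ is the twisted polynomial ring with $\tau c=c^q\tau$. A rank-$r$ Drinfeld module over $K$ is an $\mathbb{F}_q$-algebra homomorphism $\phi:A\to K\{\tau\}$ with $\phi_t=t+c_1\tau+\cdots+c_r\tau^r$, $c_r\ne0$; isomorphisms are $\psi_a=c\phi_ac^{-1}$. For monic irreducible $\pi$, $\mathbb{F}_\pi=A/\pi A$, $q_\pi=\#\mathbb{F}_\pi$; $\phi[\pi]=\{\lambda\in K^{\rm sep}:\phi_\pi(\lambda)=0\}$ gives $\bar\rho_{\phi,\pi}:G_K\to\mathrm{GL}_r(\mathbb{F}_\pi)$. Good reduction at finite $v$: isomorphic over $K_v$ to $\psi$ with $\psi_t=t+\sum c_i'\tau^i$, $c_i'\in\mathcal{O}_{K_v}$, $c_r'\in\mathcal{O}_{K_v}^\times$. Carlitz module $\mathcal{C}_t=t+\tau$, mod $\pi$ Carlitz character $\chi_\pi:G_K\to\mathrm{Aut}(\mathcal{C}[\pi])=\mathbb{F}_\pi^\times$ (here $\pi=t$, $\mathbb{F}_t=\mathbb{F}_q$). $\mathscr{D}(K,r,\pi)$: $K$-isomorphism classes of rank-$r$ $\phi$ with (D1) good reduction at all finite places not above $\pi$, (D2) $\bar\rho_{\phi,\pi}$ isomorphic to upper triangular with diagonal $\chi_\pi^{j_1},\dots,\chi_\pi^{j_r}$ for some $0\le j_s\le q_\pi-1$. *)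

theory Defs
  imports "HOL-Computational_Algebra.Polynomial"
begin

text \<open>All fields live inside one algebraically closed field of
type 'l, which is an algebraic closure of K. F_q is the set of roots of x^q = x,
A = F_q[t], F = F_q(t) is generated by t over F_q, and K is a finite extension of F
inside 'l.\<close>

definition Fq :: "nat \<Rightarrow> 'l::field set" where
  "Fq q = {x. x ^ q = x}"

definition subfield :: "'l::field set \<Rightarrow> bool" where
  "subfield K \<longleftrightarrow> 0 \<in> K \<and> 1 \<in> K \<and>
     (\<forall>x\<in>K. \<forall>y\<in>K. x + y \<in> K \<and> x - y \<in> K \<and> x * y \<in> K) \<and>
     (\<forall>x\<in>K. x \<noteq> 0 \<longrightarrow> inverse x \<in> K)"

definition alg_closed :: "'l::field itself \<Rightarrow> bool" where
  "alg_closed _ \<longleftrightarrow> (\<forall>f :: 'l poly. degree f \<ge> 1 \<longrightarrow> (\<exists>x. poly f x = 0))"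

definition algebraic_over :: "'l::field set \<Rightarrow> bool" where
  "algebraic_over K \<longleftrightarrow>
     (\<forall>x::'l. \<exists>f. f \<noteq> 0 \<and> (\<forall>j. coeff f j \<in> K) \<and> poly f x = 0)"

definition Ffield :: "nat \<Rightarrow> 'l::field \<Rightarrow> 'l set" where
  "Ffield q t = {poly a t / poly b t | a b.
      (\<forall>j. coeff a j \<in> Fq q) \<and> (\<forall>j. coeff b j \<in> Fq q) \<and> poly b t \<noteq> 0}"

definition function_field_setting :: "'l::field set \<Rightarrow> 'l \<Rightarrow> nat \<Rightarrow> nat \<Rightarrow> bool" where
  "function_field_setting K t p q \<longleftrightarrow>
     prime p \<and> (\<exists>n\<ge>1. q = p ^ n) \<and> CHAR('l) = p \<and>
     alg_closed TYPE('l) \<and> algebraic_over K \<and>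
     subfield K \<and> Fq q \<subseteq> K \<and> t \<in> K \<and>
     (\<forall>f. (\<forall>j. coeff f j \<in> Fq q) \<and> poly f t = 0 \<longrightarrow> f = 0) \<and>
     (\<exists>B. finite B \<and> B \<subseteq> K \<and>
        (\<forall>x\<in>K. \<exists>c. (\<forall>b\<in>B. c b \<in> Ffield q t) \<and> x = (\<Sum>b\<in>B. c b * b)))"

text \<open>Twisted polynomials K{tau}: coefficient sequences nat => 'l, with
tau c = c^q tau, so (a tau^i)(b tau^j) = a b^(q^i) tau^(i+j).\<close>

definition tw_mult :: "nat \<Rightarrow> (nat \<Rightarrow> 'l::field) \<Rightarrow> (nat \<Rightarrow> 'l) \<Rightarrow> nat \<Rightarrow> 'l" where
  "tw_mult q f g = (\<lambda>n. \<Sum>i\<le>n. f i * (g (n - i)) ^ (q ^ i))"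

definition tw_one :: "nat \<Rightarrow> 'l::field" where
  "tw_one = (\<lambda>n. if n = 0 then 1 else 0)"

definition tw_lin :: "'l::field \<Rightarrow> nat \<Rightarrow> 'l" where
  "tw_lin a = (\<lambda>n. if n = 0 then - a else if n = 1 then 1 else 0)"

fun tw_prod :: "nat \<Rightarrow> (nat \<Rightarrow> 'l::field) \<Rightarrow> nat \<Rightarrow> nat \<Rightarrow> 'l" where
  "tw_prod q a 0 = tw_one"
| "tw_prod q a (Suc s) = tw_mult q (tw_lin (a (Suc s))) (tw_prod q a s)"

definition phi_m :: "nat \<Rightarrow> 'l::field \<Rightarrow> nat \<Rightarrow> (nat \<Rightarrow> int) \<Rightarrow> (nat \<Rightarrow> int) \<Rightarrow> nat \<Rightarrow> 'l" where
  "phi_m q t r i m = (\<lambda>n. (-1) ^ (r - 1) *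
      tw_prod q (\<lambda>s. (- t) powi (i s + m s * (int q - 1))) r n)"

text \<open>A rank-r Drinfeld module over K, given by phi_t = t + c_1 tau + ... + c_r tau^r.\<close>
definition drinfeld_module :: "'l::field set \<Rightarrow> 'l \<Rightarrow> nat \<Rightarrow> (nat \<Rightarrow> 'l) \<Rightarrow> bool" where
  "drinfeld_module K t r phi \<longleftrightarrow>
     (\<forall>j. phi j \<in> K) \<and> phi 0 = t \<and> phi r \<noteq> 0 \<and> (\<forall>j>r. phi j = 0)"

definition discrete_val :: "'l::field set \<Rightarrow> ('l \<Rightarrow> int) \<Rightarrow> bool" where
  "discrete_val K v \<longleftrightarrow>
     (\<forall>x\<in>K-{0}. \<forall>y\<in>K-{0}. v (x * y) = v x + v y) \<and>
     (\<forall>x\<in>K-{0}. \<forall>y\<in>K-{0}. x + y \<noteq> 0 \<longrightarrow> v (x + y) \<ge> min (v x) (v y)) \<and>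
     v ` (K - {0}) = UNIV"

text \<open>Finite places: those lying over a prime of A = F_q[t], i.e. v(t) >= 0;
such a place lies above t iff v(t) > 0.\<close>
definition finite_place :: "'l::field set \<Rightarrow> 'l \<Rightarrow> ('l \<Rightarrow> int) \<Rightarrow> bool" where
  "finite_place K t v \<longleftrightarrow> discrete_val K v \<and> v t \<ge> 0"

definition above_t :: "'l::field \<Rightarrow> ('l \<Rightarrow> int) \<Rightarrow> bool" where
  "above_t t v \<longleftrightarrow> v t > 0"

definition integral_at :: "('l::field \<Rightarrow> int) \<Rightarrow> 'l \<Rightarrow> bool" where
  "integral_at v x \<longleftrightarrow> x = 0 \<or> v x \<ge> 0"

definition unit_at :: "('l::field \<Rightarrow> int) \<Rightarrow> 'l \<Rightarrow> bool" where
  "unit_at v x \<longleftrightarrow> x \<noteq> 0 \<and> v x = 0"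

text \<open>Good reduction at v: phi is isomorphic (psi_t = c phi_t c^-1) to a psi with
integral coefficients and unit leading coefficient.\<close>
definition good_reduction :: "'l::field set \<Rightarrow> nat \<Rightarrow> nat \<Rightarrow> (nat \<Rightarrow> 'l) \<Rightarrow> ('l \<Rightarrow> int) \<Rightarrow> bool" where
  "good_reduction K q r phi v \<longleftrightarrow>
     (\<exists>c\<in>K. c \<noteq> 0 \<and>
        (\<forall>j\<in>{1..r}. integral_at v (c * phi j * (inverse c) ^ (q ^ j))) \<and>
        unit_at v (c * phi r * (inverse c) ^ (q ^ r)))"

definition D1 :: "'l::field set \<Rightarrow> 'l \<Rightarrow> nat \<Rightarrow> nat \<Rightarrow> (nat \<Rightarrow> 'l) \<Rightarrow> bool" where
  "D1 K t q r phi \<longleftrightarrow>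
     (\<forall>v. finite_place K t v \<and> \<not> above_t t v \<longrightarrow> good_reduction K q r phi v)"

text \<open>Absolute Galois group, realised as Aut('l / K) ('l an algebraic closure of K).\<close>
definition galois_group :: "'l::field set \<Rightarrow> ('l \<Rightarrow> 'l) set" where
  "galois_group K = {\<sigma>. bij \<sigma> \<and> (\<forall>x y. \<sigma> (x + y) = \<sigma> x + \<sigma> y \<and> \<sigma> (x * y) = \<sigma> x * \<sigma> y)
                         \<and> (\<forall>x\<in>K. \<sigma> x = x)}"

definition torsion :: "nat \<Rightarrow> nat \<Rightarrow> (nat \<Rightarrow> 'l::field) \<Rightarrow> 'l set" where
  "torsion q r phi = {x. (\<Sum>j\<le>r. phi j * x ^ (q ^ j)) = 0}"

text \<open>Mod t Carlitz character: sigma acts on C[t] = {x. t x + x^q = 0} by a scalar in F_q.\<close>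
definition carlitz_char :: "'l::field \<Rightarrow> nat \<Rightarrow> ('l \<Rightarrow> 'l) \<Rightarrow> 'l" where
  "carlitz_char t q \<sigma> =
     (THE w. w \<in> Fq q \<and> (\<forall>x. t * x + x ^ q = 0 \<longrightarrow> \<sigma> x = w * x))"

text \<open>rho_{phi,t} is isomorphic to an upper triangular representation with diagonal
characters chi^(d 1), ..., chi^(d r): there is an F_q-basis e_1..e_r of phi[t] such that
sigma(e_s) = chi(sigma)^(d s) e_s + (F_q-combination of e_1..e_(s-1)).\<close>
definition upper_tri_rep :: "'l::field set \<Rightarrow> 'l \<Rightarrow> nat \<Rightarrow> nat \<Rightarrow> (nat \<Rightarrow> 'l) \<Rightarrow> (nat \<Rightarrow> int) \<Rightarrow> bool" where
  "upper_tri_rep K t q r phi d \<longleftrightarrow>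
     (\<exists>e :: nat \<Rightarrow> 'l.
        (\<forall>x. x \<in> torsion q r phi \<longleftrightarrow>
              (\<exists>c. (\<forall>u\<in>{1..r}. c u \<in> Fq q) \<and> x = (\<Sum>u=1..r. c u * e u))) \<and>
        (\<forall>c. (\<forall>u\<in>{1..r}. c u \<in> Fq q) \<and> (\<Sum>u=1..r. c u * e u) = 0 \<longrightarrow>
              (\<forall>u\<in>{1..r}. c u = 0)) \<and>
        (\<forall>\<sigma>\<in>galois_group K. \<forall>s\<in>{1..r}. \<exists>c. (\<forall>u. c u \<in> Fq q) \<and>
              \<sigma> (e s) = (carlitz_char t q \<sigma>) powi (d s) * e s + (\<Sum>u\<in>{1..<s}. c u * e u)))"

definition D2 :: "'l::field set \<Rightarrow> 'l \<Rightarrow> nat \<Rightarrow> nat \<Rightarrow> (nat \<Rightarrow> 'l) \<Rightarrow> bool" where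
  "D2 K t q r phi \<longleftrightarrow>
     (\<exists>j :: nat \<Rightarrow> nat. (\<forall>s\<in>{1..r}. j s \<le> q - 1) \<and>
        upper_tri_rep K t q r phi (\<lambda>s. int (j s)))"

text \<open>[phi] in D(K, r, t): a rank-r Drinfeld module satisfying (D1) and (D2)
(both conditions are invariant under K-isomorphism).\<close>
definition in_D :: "'l::field set \<Rightarrow> 'l \<Rightarrow> nat \<Rightarrow> nat \<Rightarrow> (nat \<Rightarrow> 'l) \<Rightarrow> bool" where
  "in_D K t q r phi \<longleftrightarrow> drinfeld_module K t r phi \<and> D1 K t q r phi \<and> D2 K t q r phi"

end

theory Submission imports Defs "HOL-Computational_Algebra.Primes"
begin

lemma tw_prod_Suc_coeff:
  "tw_prod q a (Suc s) k = - a (Suc s) * tw_prod q a s k + (if k = 0 then 0 else (tw_prod q a s (k-1))^q)"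
proof (cases k)
  case 0 then show ?thesis by (simp add: tw_mult_def tw_lin_def)
next
  case (Suc k')
  have "tw_prod q a (Suc s) k = (\<Sum>i\<le>Suc k'. tw_lin (a (Suc s)) i * (tw_prod q a s (Suc k' - i)) ^ (q ^ i))"
    by (simp add: tw_mult_def Suc)
  also have "\<dots> = - a (Suc s) * tw_prod q a s k + (\<Sum>i\<le>k'. tw_lin (a (Suc s)) (Suc i) * (tw_prod q a s (k' - i)) ^ (q ^ Suc i))"
    by (subst sum.atMost_Suc_shift) (simp add: tw_lin_def Suc)
  also have "(\<Sum>i\<le>k'. tw_lin (a (Suc s)) (Suc i) * (tw_prod q a s (k' - i)) ^ (q ^ Suc i))
     = (\<Sum>i\<le>k'. if i = 0 then (tw_prod q a s k') ^ q else 0)"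
    by (rule sum.cong) (auto simp: tw_lin_def)
  finally show ?thesis by (simp add: Suc)
qed

declare tw_prod.simps(2)[simp del]

lemma tw_prod_high: "q > 0 \<Longrightarrow> k > s \<Longrightarrow> tw_prod q a s k = 0"
proof (induction s arbitrary: k)
  case 0 then show ?case by (simp add: tw_one_def)
next
  case (Suc s) then show ?case by (simp add: tw_prod_Suc_coeff)
qed

lemma tw_prod_top: "q > 0 \<Longrightarrow> tw_prod q a s s = 1"
proof (induction s)
  case 0 then show ?case by (simp add: tw_one_def)
next
  case (Suc s) then show ?case by (simp add: tw_prod_Suc_coeff tw_prod_high)
qed

lemma tw_prod_zero: "tw_prod q a s 0 = (\<Prod>u=1..s. - a u)"
proof (induction s)
  case 0 then show ?case by (simp add: tw_one_def)
next
  case (Suc s) then show ?case by (simp add: tw_prod_Suc_coeff prod.nat_ivl_Suc' mult.commute)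
qed

fun Ev :: "nat \<Rightarrow> (nat \<Rightarrow> 'l::field) \<Rightarrow> nat \<Rightarrow> 'l \<Rightarrow> 'l" where
  "Ev q a 0 x = x"
| "Ev q a (Suc s) x = (Ev q a s x) ^ q - a (Suc s) * Ev q a s x"

definition frobq :: "nat \<Rightarrow> 'l::field itself \<Rightarrow> bool" where
  "frobq q _ \<longleftrightarrow> q > 1 \<and> (\<forall>x y :: 'l. (x + y) ^ q = x ^ q + y ^ q)"

lemma frobq_sum: "frobq q TYPE('l::field) \<Longrightarrow> (sum (f :: 'b \<Rightarrow> 'l) A) ^ q = (\<Sum>i\<in>A. f i ^ q)"
  by (induction A rule: infinite_finite_induct) (auto simp: frobq_def)

lemma tw_eval:
  assumes "frobq q TYPE('l::field)" "N \<ge> s"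
  shows "(\<Sum>j\<le>N. tw_prod q a s j * (x::'l) ^ (q ^ j)) = Ev q a s x"
  using assms(2)
proof (induction s arbitrary: N)
  case 0
  have "(\<Sum>j\<le>N. tw_prod q a 0 j * x ^ (q ^ j)) = (\<Sum>j\<le>N. if j = 0 then x else 0)"
    by (rule sum.cong) (auto simp: tw_one_def)
  then show ?case by simp
next
  case (Suc s)
  obtain N' where N: "N = Suc N'" and N': "N' \<ge> s" using Suc.prems by (cases N) auto
  have q0: "q > 0" using assms(1) by (simp add: frobq_def)
  have "(\<Sum>j\<le>N. tw_prod q a (Suc s) j * x ^ (q ^ j))
     = (\<Sum>j\<le>N. - a (Suc s) * (tw_prod q a s j * x ^ (q ^ j))) +
       (\<Sum>j\<le>N. (if j = 0 then 0 else (tw_prod q a s (j-1))^q) * x ^ (q ^ j))"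
    by (simp add: tw_prod_Suc_coeff sum.distrib[symmetric] algebra_simps)
  also have "(\<Sum>j\<le>N. (if j = 0 then 0 else (tw_prod q a s (j-1))^q) * x ^ (q ^ j))
      = (\<Sum>j\<le>N'. (tw_prod q a s j * x ^ (q ^ j)) ^ q)"
    unfolding N by (subst sum.atMost_Suc_shift) (simp add: power_mult_distrib power_Suc flip: power_mult, simp add: mult.commute)
  also have "\<dots> = (Ev q a s x) ^ q"
    by (subst frobq_sum[OF assms(1), symmetric]) (simp only: Suc.IH[OF N'])
  also have "(\<Sum>j\<le>N. - a (Suc s) * (tw_prod q a s j * x ^ (q ^ j))) = - a (Suc s) * Ev q a s x"
    using Suc.IH[of N] Suc.prems by (simp add: sum_negf sum_distrib_left[symmetric])
  finally show ?case by simp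
qed


lemma frobq_pos: "frobq q TYPE('l::field) \<Longrightarrow> q > 0" by (simp add: frobq_def)

lemma frobq_add: "frobq q TYPE('l::field) \<Longrightarrow> ((x::'l) + y) ^ q = x ^ q + y ^ q"
  by (simp add: frobq_def)

lemma frobq_diff: assumes "frobq q TYPE('l::field)" shows "((x::'l) - y) ^ q = x ^ q - y ^ q"
proof -
  have "((x - y) + y) ^ q = (x - y) ^ q + y ^ q" by (rule frobq_add[OF assms])
  then show ?thesis by (simp add: algebra_simps)
qed

lemma Fq_0: "frobq q TYPE('l::field) \<Longrightarrow> (0::'l) \<in> Fq q"
  by (simp add: Fq_def frobq_def)
lemma Fq_1: "(1::'l::field) \<in> Fq q" by (simp add: Fq_def)
lemma Fq_add: "frobq q TYPE('l::field) \<Longrightarrow> (x::'l) \<in> Fq q \<Longrightarrow> y \<in> Fq q \<Longrightarrow> x + y \<in> Fq q"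
  by (simp add: Fq_def frobq_add)
lemma Fq_diff: "frobq q TYPE('l::field) \<Longrightarrow> (x::'l) \<in> Fq q \<Longrightarrow> y \<in> Fq q \<Longrightarrow> x - y \<in> Fq q"
  by (simp add: Fq_def frobq_diff)
lemma Fq_mult: "(x::'l::field) \<in> Fq q \<Longrightarrow> y \<in> Fq q \<Longrightarrow> x * y \<in> Fq q"
  by (simp add: Fq_def power_mult_distrib)
lemma Fq_powi: "(x::'l::field) \<in> Fq q \<Longrightarrow> x powi k \<in> Fq q"
proof -
  assume "x \<in> Fq q"
  then have "x ^ q = x" by (simp add: Fq_def)
  have "(x powi k) ^ q = x powi (k * int q)" by (rule power_int_power')
  also have "\<dots> = (x ^ q) powi k" by (simp add: power_int_power mult.commute)
  also have "\<dots> = x powi k" using \<open>x ^ q = x\<close> by simp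
  finally show ?thesis by (simp add: Fq_def)
qed
lemma Fq_divide: "(x::'l::field) \<in> Fq q \<Longrightarrow> y \<in> Fq q \<Longrightarrow> x / y \<in> Fq q"
  by (simp add: Fq_def power_divide)

lemma Ev_0: "frobq q TYPE('l::field) \<Longrightarrow> Ev q a s (0::'l) = 0"
  by (induction s) (auto simp: frobq_def)

lemma Ev_add: "frobq q TYPE('l::field) \<Longrightarrow> Ev q a s ((x::'l) + y) = Ev q a s x + Ev q a s y"
  by (induction s) (auto simp: frobq_add algebra_simps)

lemma Ev_diff: "frobq q TYPE('l::field) \<Longrightarrow> Ev q a s ((x::'l) - y) = Ev q a s x - Ev q a s y"
  using Ev_add[of q a s "x - y" y] by simp

lemma Ev_scale: "c \<in> Fq q \<Longrightarrow> Ev q a s ((c::'l::field) * x) = c * Ev q a s x"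
  by (induction s) (auto simp: Fq_def power_mult_distrib algebra_simps)

lemma Ev_sum: "frobq q TYPE('l::field) \<Longrightarrow> Ev q a s (\<Sum>u\<in>A. (f u :: 'l)) = (\<Sum>u\<in>A. Ev q a s (f u))"
  by (induction A rule: infinite_finite_induct) (auto simp: Ev_0 Ev_add)

definition chainH :: "nat \<Rightarrow> (nat \<Rightarrow> 'l::field) \<Rightarrow> (nat \<Rightarrow> 'l) \<Rightarrow> (nat \<Rightarrow> 'l) \<Rightarrow> nat \<Rightarrow> bool" where
  "chainH q a e \<mu> s \<longleftrightarrow> (\<forall>u. 1 \<le> u \<and> u \<le> s \<longrightarrow>
      Ev q a (u - 1) (e u) = \<mu> u \<and> \<mu> u \<noteq> 0 \<and> \<mu> u ^ q = a u * \<mu> u)"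

lemma Ev_span:
  assumes F: "frobq q TYPE('l::field)" and H: "chainH q a e \<mu> s"
  shows "Ev q a s (x::'l) = 0 \<longleftrightarrow> (\<exists>c. (\<forall>u\<in>{1..s}. c u \<in> Fq q) \<and> x = (\<Sum>u=1..s. c u * e u))"
  using H
proof (induction s arbitrary: x)
  case 0 then show ?case by simp
next
  case (Suc s)
  have Hs: "chainH q a e \<mu> s" using Suc.prems by (simp add: chainH_def)
  have hE: "Ev q a s (e (Suc s)) = \<mu> (Suc s)" and hmu: "\<mu> (Suc s) \<noteq> 0"
    and hq: "\<mu> (Suc s) ^ q = a (Suc s) * \<mu> (Suc s)"
    using Suc.prems by (auto simp: chainH_def)
  have ha: "a (Suc s) \<noteq> 0"
  proof
    assume "a (Suc s) = 0"
    then have "\<mu> (Suc s) ^ q = 0" using hq by simp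
    then show False using hmu by simp
  qed
  show ?case
  proof
    assume E0: "Ev q a (Suc s) x = 0"
    define y where "y = Ev q a s x"
    have yq: "y ^ q = a (Suc s) * y" using E0 by (simp add: y_def)
    define c0 where "c0 = y / \<mu> (Suc s)"
    have c0F: "c0 \<in> Fq q"
      unfolding Fq_def c0_def by (simp add: power_divide yq hq ha hmu)
    have "Ev q a s (x - c0 * e (Suc s)) = y - c0 * \<mu> (Suc s)"
      using F by (simp add: Ev_diff Ev_scale[OF c0F] hE y_def)
    then have "Ev q a s (x - c0 * e (Suc s)) = 0"
      by (simp add: c0_def hmu)
    then obtain c where c: "\<forall>u\<in>{1..s}. c u \<in> Fq q" "x - c0 * e (Suc s) = (\<Sum>u=1..s. c u * e u)"
      using Suc.IH[OF Hs] by blast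
    define c' where "c' = c(Suc s := c0)"
    have "(\<Sum>u=1..s. c u * e u) = (\<Sum>u=1..s. c' u * e u)"
      by (rule sum.cong) (auto simp: c'_def)
    then have "x = (\<Sum>u=1..Suc s. c' u * e u)"
      using c(2) by (simp add: c'_def algebra_simps)
    moreover have "\<forall>u\<in>{1..Suc s}. c' u \<in> Fq q" using c(1) c0F by (auto simp: c'_def)
    ultimately show "\<exists>c. (\<forall>u\<in>{1..Suc s}. c u \<in> Fq q) \<and> x = (\<Sum>u=1..Suc s. c u * e u)" by blast
  next
    assume "\<exists>c. (\<forall>u\<in>{1..Suc s}. c u \<in> Fq q) \<and> x = (\<Sum>u=1..Suc s. c u * e u)"
    then obtain c where c: "\<forall>u\<in>{1..Suc s}. c u \<in> Fq q" "x = (\<Sum>u=1..Suc s. c u * e u)" by blast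
    have x: "x = (\<Sum>u=1..s. c u * e u) + c (Suc s) * e (Suc s)" using c(2) by simp
    have "Ev q a s (\<Sum>u=1..s. c u * e u) = 0"
      by (subst Suc.IH[OF Hs]) (rule exI[of _ c], use c(1) in auto)
    moreover have cF: "c (Suc s) \<in> Fq q" using c(1) by auto
    ultimately have "Ev q a s x = c (Suc s) * \<mu> (Suc s)"
      using x F by (simp add: Ev_add Ev_scale hE)
    moreover have "(c (Suc s) * \<mu> (Suc s)) ^ q = c (Suc s) * \<mu> (Suc s)^q"
      using cF by (simp add: Fq_def power_mult_distrib)
    ultimately show "Ev q a (Suc s) x = 0" by (simp add: hq)
  qed
qed

lemma Ev_indep:
  assumes F: "frobq q TYPE('l::field)" and H: "chainH q a e \<mu> s"
  shows "(\<forall>u\<in>{1..s}. c u \<in> Fq q) \<Longrightarrow> (\<Sum>u=1..s. c u * (e u :: 'l)) = 0 \<Longrightarrow> (\<forall>u\<in>{1..s}. c u = 0)"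
  using H
proof (induction s)
  case 0 then show ?case by simp
next
  case (Suc s)
  have Hs: "chainH q a e \<mu> s" using Suc.prems by (simp add: chainH_def)
  have hE: "Ev q a s (e (Suc s)) = \<mu> (Suc s)" and hmu: "\<mu> (Suc s) \<noteq> 0"
    using Suc.prems by (auto simp: chainH_def)
  have z: "Ev q a s (\<Sum>u=1..s. c u * e u) = 0"
    by (subst Ev_span[OF F Hs]) (rule exI[of _ c], use Suc.prems(1) in auto)
  have cF: "c (Suc s) \<in> Fq q" using Suc.prems by auto
  have "Ev q a s ((\<Sum>u=1..s. c u * e u) + c (Suc s) * e (Suc s)) = 0"
    using Suc.prems by (simp add: Ev_0 F)
  moreover have "Ev q a s ((\<Sum>u=1..s. c u * e u) + c (Suc s) * e (Suc s)) = Ev q a s (\<Sum>u=1..s. c u * e u) + c (Suc s) * \<mu> (Suc s)"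
    by (simp only: Ev_add[OF F] Ev_scale[OF cF] hE)
  ultimately have "c (Suc s) * \<mu> (Suc s) = 0" using z by (metis add.left_neutral)
  then have cs: "c (Suc s) = 0" using hmu by simp
  have s0: "(\<Sum>u=1..s. c u * e u) = 0" using Suc.prems(2) cs by simp
  have "\<forall>u\<in>{1..s}. c u \<in> Fq q" using Suc.prems(1) by simp
  then have "\<forall>u\<in>{1..s}. c u = 0" using Suc.IH[OF _ s0 Hs] by blast
  then show ?case using cs by (auto simp: le_Suc_eq)
qed


fun pE :: "nat \<Rightarrow> (nat \<Rightarrow> 'l::field) \<Rightarrow> nat \<Rightarrow> 'l poly" where
  "pE q a 0 = [:0, 1:]"
| "pE q a (Suc s) = pE q a s ^ q - smult (a (Suc s)) (pE q a s)"

lemma poly_pE: "poly (pE q a s) x = Ev q a s x"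
  by (induction s) auto

lemma degree_pE: "q > 1 \<Longrightarrow> degree (pE q a s) = q ^ s"
proof (induction s)
  case 0 then show ?case by simp
next
  case (Suc s)
  have nz: "pE q a s \<noteq> 0" using Suc by (auto simp del: pE.simps)
  have d1: "degree (pE q a s ^ q) = q * q ^ s" using degree_power_eq[OF nz] Suc by simp
  have "degree (- smult (a (Suc s)) (pE q a s)) \<le> q ^ s"
    using degree_smult_le[of "a (Suc s)" "pE q a s"] Suc by simp
  also have "q ^ s < q * q ^ s" using Suc.prems by simp
  finally have "degree (pE q a s ^ q + - smult (a (Suc s)) (pE q a s)) = q * q ^ s"
    using d1 by (simp add: degree_add_eq_left del: add_uminus_conv_diff)
  then show ?case by (simp only: pE.simps diff_conv_add_uminus power_Suc)
qed

lemma Ev_surj: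
  assumes "alg_closed TYPE('l::field)" "q > 1"
  shows "\<exists>x. Ev q a s x = (y::'l)"
proof -
  have "degree (pE q a s + - [:y:]) = q ^ s"
    using degree_pE[OF assms(2)] assms(2) by (subst degree_add_eq_left) auto
  moreover have "q ^ s \<ge> 1" using assms(2) by simp
  ultimately obtain x where "poly (pE q a s + - [:y:]) x = 0"
    using assms(1) unfolding alg_closed_def by metis
  then show ?thesis by (auto simp: poly_pE)
qed

lemma carlitz_root:
  assumes "alg_closed TYPE('l::field)" "q > 1" "(t::'l) \<noteq> 0"
  shows "\<exists>L. L \<noteq> 0 \<and> L ^ (q - 1) = - t"
proof -
  have "degree (monom (1::'l) (q - 1) + [:t:]) = q - 1"
    using assms(2) by (subst degree_add_eq_left) (auto simp: degree_monom_eq)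
  then obtain x where "poly (monom (1::'l) (q - 1) + [:t:]) x = 0"
    using assms(1) assms(2) unfolding alg_closed_def by (metis diff_is_0_eq le_simps(3) less_one not_le)
  then have x: "x ^ (q - 1) = - t" by (simp add: poly_monom eq_neg_iff_add_eq_0)
  have "x \<noteq> 0"
  proof
    assume "x = 0"
    moreover have "q - 1 \<noteq> 0" using assms(2) by simp
    ultimately have "x ^ (q - 1) = 0" by (simp add: zero_power)
    then show False using x assms(3) by (metis neg_equal_0_iff_equal)
  qed
  with x show ?thesis by blast
qed

definition closR :: "'l::field set \<Rightarrow> bool" where
  "closR S \<longleftrightarrow> 0 \<in> S \<and> 1 \<in> S \<and> (\<forall>x\<in>S. \<forall>y\<in>S. x + y \<in> S \<and> x * y \<in> S \<and> - x \<in> S)"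

lemma closR_pow: "closR S \<Longrightarrow> x \<in> S \<Longrightarrow> x ^ n \<in> S"
  by (induction n) (auto simp: closR_def)

lemma tw_prod_in:
  assumes "closR S" "\<And>u. a u \<in> S"
  shows "tw_prod q a s k \<in> S"
  using assms(1)
proof (induction s arbitrary: k)
  case 0 then show ?case by (auto simp: tw_one_def closR_def)
next
  case (Suc s)
  have A: "- a (Suc s) * tw_prod q a s k \<in> S"
    using Suc assms(2) by (auto simp: closR_def)
  have B: "(if k = 0 then 0 else (tw_prod q a s (k-1))^q) \<in> S"
    using Suc closR_pow[OF Suc.prems] by (auto simp: closR_def)
  show ?case using A B Suc.prems unfolding tw_prod_Suc_coeff by (auto simp: closR_def)
qed

lemma subfield_closR: "subfield K \<Longrightarrow> closR K"
  unfolding subfield_def closR_def by (metis diff_0)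

lemma subfield_powi: assumes "subfield K" "x \<in> K" shows "x powi k \<in> K"
proof -
  have c: "closR K" using assms subfield_closR by blast
  have "inverse x \<in> K" using assms unfolding subfield_def by (cases "x = 0") auto
  then show ?thesis using assms closR_pow[OF c] by (auto simp: power_int_def)
qed

section \<open>Galois automorphisms\<close>

context
  fixes K :: "'l::field set" and \<sigma> :: "'l \<Rightarrow> 'l"
  assumes sK: "subfield K" and sG: "\<sigma> \<in> galois_group K"
begin

lemma g_add: "\<sigma> (x + y) = \<sigma> x + \<sigma> y" and g_mult: "\<sigma> (x * y) = \<sigma> x * \<sigma> y"
  and g_fix: "x \<in> K \<Longrightarrow> \<sigma> x = x" and g_bij: "bij \<sigma>"
  using sG by (auto simp: galois_group_def)

lemma g_0: "\<sigma> 0 = 0" using g_fix sK by (simp add: subfield_def)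
lemma g_1: "\<sigma> 1 = 1" using g_fix sK by (simp add: subfield_def)

lemma g_diff: "\<sigma> (x - y) = \<sigma> x - \<sigma> y"
  using g_add[of "x - y" y] by (simp add: algebra_simps)

lemma g_pow: "\<sigma> (x ^ n) = \<sigma> x ^ n"
  by (induction n) (auto simp: g_1 g_mult)

lemma g_inverse: "\<sigma> (inverse x) = inverse (\<sigma> x)"
proof (cases "x = 0")
  case True then show ?thesis by (simp add: g_0)
next
  case False
  then have "\<sigma> x * \<sigma> (inverse x) = 1" by (metis g_mult g_1 right_inverse)
  then show ?thesis by (metis inverse_unique)
qed

lemma g_powi: "\<sigma> (x powi k) = \<sigma> x powi k"
  by (simp add: power_int_def g_pow g_inverse)

lemma g_Ev: "(\<And>u. a u \<in> K) \<Longrightarrow> \<sigma> (Ev q a s x) = Ev q a s (\<sigma> x)"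
  by (induction s) (auto simp: g_diff g_pow g_mult g_fix)

lemma g_inj: "\<sigma> x = \<sigma> y \<Longrightarrow> x = y"
  using g_bij by (metis bij_def injD)

end

lemma carlitz_char_eq:
  assumes sK: "subfield K" and sG: "\<sigma> \<in> galois_group K" and FK: "Fq q \<subseteq> K"
    and tK: "t \<in> K" and q: "q > 1" and lam: "L \<noteq> 0" "L ^ (q - 1) = - (t::'l::field)"
  shows "\<exists>w. w \<in> Fq q \<and> w \<noteq> 0 \<and> \<sigma> L = w * L \<and> carlitz_char t q \<sigma> = w"
proof -
  have qq: "q = Suc (q - 1)" using q by simp
  have "L ^ q = L * L ^ (q - 1)" by (subst qq) simp
  then have lq: "L ^ q = - t * L" by (metis lam(2) mult.commute)
  have roots: "x = (x / L) * L \<and> x / L \<in> Fq q" if "t * x + x ^ q = 0" for x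
  proof -
    have xq: "x ^ q = - t * x" using that by (simp add: eq_neg_iff_add_eq_0 add.commute)
    have "(x / L) ^ q = x / L"
    proof (cases "t = 0")
      case True
      then have "x = 0" using xq q by simp
      then show ?thesis using q by simp
    next
      case False
      then show ?thesis by (simp add: power_divide xq lq lam(1))
    qed
    then show ?thesis using lam(1) by (simp add: Fq_def)
  qed
  have "t * \<sigma> L + \<sigma> L ^ q = \<sigma> (t * L + L ^ q)"
    using g_add[OF sK sG] g_mult[OF sK sG] g_pow[OF sK sG] g_fix[OF sK sG tK] by simp
  also have "\<dots> = 0" using lq g_0[OF sK sG] by simp
  finally obtain w where w: "w \<in> Fq q" "\<sigma> L = w * L"
    using roots by blast
  have wnz: "w \<noteq> 0"
  proof
    assume "w = 0"
    then have "\<sigma> L = \<sigma> 0" using w g_0[OF sK sG] by simp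
    then show False using g_inj[OF sK sG] lam(1) by blast
  qed
  have P: "w \<in> Fq q \<and> (\<forall>x. t * x + x ^ q = 0 \<longrightarrow> \<sigma> x = w * x)"
  proof (intro conjI allI impI)
    show "w \<in> Fq q" by (rule w(1))
    fix x assume "t * x + x ^ q = 0"
    from roots[OF this] have "x = (x / L) * L" "x / L \<in> Fq q" by auto
    then have "\<sigma> x = \<sigma> (x / L) * \<sigma> L" by (metis g_mult[OF sK sG])
    also have "\<sigma> (x / L) = x / L" using \<open>x / L \<in> Fq q\<close> FK g_fix[OF sK sG] by blast
    finally show "\<sigma> x = w * x" using w(2) lam(1) by simp
  qed
  have "carlitz_char t q \<sigma> = w"
    unfolding carlitz_char_def
  proof (rule the_equality)
    show "w \<in> Fq q \<and> (\<forall>x. t * x + x ^ q = 0 \<longrightarrow> \<sigma> x = w * x)" by (rule P)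
    fix w' assume "w' \<in> Fq q \<and> (\<forall>x. t * x + x ^ q = 0 \<longrightarrow> \<sigma> x = w' * x)"
    then have "\<sigma> L = w' * L" using lq by simp
    then show "w' = w" using w(2) lam(1) by simp
  qed
  then show ?thesis using w wnz by blast
qed


lemma prod_powi: "(x::'l::field) \<noteq> 0 \<Longrightarrow> (\<Prod>u\<in>A. x powi f u) = x powi (\<Sum>u\<in>A. f u)"
  by (induction A rule: infinite_finite_induct) (auto simp: power_int_add)

lemma chainH_mono: "chainH q a e \<mu> r \<Longrightarrow> s \<le> r \<Longrightarrow> chainH q a e \<mu> s"
  by (auto simp: chainH_def)

lemma powi_period:
  assumes "(w::'l::field) \<noteq> 0" "w ^ q = w" "q \<ge> 1"
  shows "w powi (i + (int q - 1) * k) = w powi i"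
proof -
  have qq: "q = Suc (q - 1)" using assms(3) by simp
  have "w * w ^ (q - 1) = w * 1" using assms(2) by (subst (asm) qq) simp
  then have w1: "w ^ (q - 1) = 1" using assms(1) by simp
  have "w powi (i + (int q - 1) * k) = w powi i * w powi ((int q - 1) * k)"
    using assms(1) by (simp add: power_int_add)
  also have "w powi ((int q - 1) * k) = (w ^ (q - 1)) powi k"
    using assms(3) by (simp add: power_int_power of_nat_diff)
  finally show ?thesis using w1 by simp
qed

lemma utr_general:
  fixes K :: "'l::field set" and t :: 'l
  assumes sK: "subfield K" and FK: "Fq q \<subseteq> K" and tK: "t \<in> K" and t0: "t \<noteq> 0"
    and ac: "alg_closed TYPE('l)" and F: "frobq q TYPE('l)" and q1: "q > 1"
    and phi: "\<And>n. phi n = (-1) ^ (r - 1) * tw_prod q a r n"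
    and a: "\<And>u. a u = (- t) powi (i u + m u * (int q - 1))"
    and d: "\<forall>s\<in>{1..r}. \<exists>k. d s = i s + (int q - 1) * k"
  shows "upper_tri_rep K t q r phi d"
proof -
  obtain L where L: "L \<noteq> 0" "L ^ (q - 1) = - t" using carlitz_root[OF ac q1 t0] by blast
  have mt0: "- t \<noteq> 0" using t0 by simp
  define \<mu> where "\<mu> u = L powi i u * (- t) powi m u" for u
  have mu0: "\<mu> u \<noteq> 0" for u using L(1) mt0 by (simp add: \<mu>_def power_int_not_zero)
  have muq: "\<mu> u ^ q = a u * \<mu> u" for u
  proof -
    have qq: "q = Suc (q - 1)" using q1 by simp
    have "\<mu> u ^ q = \<mu> u ^ (q - 1) * \<mu> u" by (subst qq) (simp add: mult.commute)
    also have "\<mu> u ^ (q - 1) = (L ^ (q - 1)) powi i u * (- t) powi (m u * int (q - 1))"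
      unfolding \<mu>_def power_mult_distrib power_int_power' power_int_power
      by (simp add: mult.commute)
    also have "\<dots> = (- t) powi (i u + m u * (int q - 1))"
      using L(2) mt0 q1 by (simp add: power_int_add of_nat_diff)
    finally show ?thesis by (simp add: a)
  qed
  define e where "e u = (SOME x. Ev q a (u - 1) x = \<mu> u)" for u
  have eE: "Ev q a (u - 1) (e u) = \<mu> u" for u
    unfolding e_def by (rule someI_ex) (rule Ev_surj[OF ac q1])
  have H: "chainH q a e \<mu> s" for s using eE mu0 muq by (simp add: chainH_def)
  have aK: "a u \<in> K" for u unfolding a using sK tK
    by (intro subfield_powi) (auto simp: subfield_def)
  have tors: "x \<in> torsion q r phi \<longleftrightarrow> Ev q a r x = 0" for x
  proof -
    have "(\<Sum>j\<le>r. phi j * x ^ (q ^ j)) = (-1) ^ (r - 1) * Ev q a r x"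
      unfolding phi using tw_eval[OF F, of r r a x] by (simp add: sum_distrib_left[symmetric] mult.assoc)
    then show ?thesis by (simp add: torsion_def)
  qed
  show ?thesis
    unfolding upper_tri_rep_def
  proof (rule exI[of _ e], intro conjI allI impI ballI)
    fix x show "x \<in> torsion q r phi \<longleftrightarrow> (\<exists>c. (\<forall>u\<in>{1..r}. c u \<in> Fq q) \<and> x = (\<Sum>u=1..r. c u * e u))"
      using tors Ev_span[OF F H] by simp
  next
    fix c u assume "(\<forall>u\<in>{1..r}. c u \<in> Fq q) \<and> (\<Sum>u=1..r. c u * e u) = 0" "u \<in> {1..r}"
    then show "c u = 0" using Ev_indep[OF F H] by blast
  next
    fix \<sigma> s assume sG: "\<sigma> \<in> galois_group K" and s: "s \<in> {1..r}"
    obtain w where w: "w \<in> Fq q" "w \<noteq> 0" "\<sigma> L = w * L" "carlitz_char t q \<sigma> = w"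
      using carlitz_char_eq[OF sK sG FK tK q1 L] by blast
    obtain k where k: "d s = i s + (int q - 1) * k" using d s by blast
    have wq: "w ^ q = w" using w(1) by (simp add: Fq_def)
    define W where "W = w powi d s"
    have WF: "W \<in> Fq q" unfolding W_def by (rule Fq_powi[OF w(1)])
    have Wi: "W = w powi i s" unfolding W_def k using powi_period[OF w(2) wq] q1 by simp
    have "- t \<in> K" using tK sK unfolding subfield_def by (metis diff_0)
    then have "\<sigma> (- t) = - t" using g_fix[OF sK sG] by blast
    then have smu: "\<sigma> (\<mu> s) = W * \<mu> s"
      unfolding \<mu>_def Wi by (simp add: g_mult[OF sK sG] g_powi[OF sK sG] w(3) power_int_mult_distrib)
    have gE: "\<sigma> (Ev q a (s - 1) (e s)) = Ev q a (s - 1) (\<sigma> (e s))"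
      by (rule g_Ev[OF sK sG aK])
    have "Ev q a (s - 1) (\<sigma> (e s) - W * e s) = Ev q a (s - 1) (\<sigma> (e s)) - W * Ev q a (s - 1) (e s)"
      by (simp only: Ev_diff[OF F] Ev_scale[OF WF])
    also have "\<dots> = \<sigma> (\<mu> s) - W * \<mu> s" using gE eE[of s] by simp
    also have "\<dots> = 0" by (simp add: smu)
    finally obtain c where c: "\<forall>u\<in>{1..s-1}. c u \<in> Fq q" "\<sigma> (e s) - W * e s = (\<Sum>u=1..s-1. c u * e u)"
      using Ev_span[OF F H] by blast
    define c' where "c' u = (if u \<in> {1..s-1} then c u else 0)" for u
    have "{1..<s} = {1..s-1}" using s by auto
    then have "(\<Sum>u\<in>{1..<s}. c' u * e u) = (\<Sum>u=1..s-1. c u * e u)"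
      by (simp add: c'_def)
    then have "\<sigma> (e s) = carlitz_char t q \<sigma> powi d s * e s + (\<Sum>u\<in>{1..<s}. c' u * e u)"
      using c(2) w(4) by (simp add: W_def algebra_simps)
    moreover have "\<forall>u. c' u \<in> Fq q" using c(1) F by (simp add: c'_def Fq_0)
    ultimately show "\<exists>c. (\<forall>u. c u \<in> Fq q) \<and>
        \<sigma> (e s) = carlitz_char t q \<sigma> powi d s * e s + (\<Sum>u\<in>{1..<s}. c u * e u)" by blast
  qed
qed


lemma dv_basic:
  assumes dv: "discrete_val K v" and sK: "subfield K"
  shows "v 1 = 0" "v (-1) = 0"
    "\<And>x y. x \<in> K \<Longrightarrow> y \<in> K \<Longrightarrow> x \<noteq> 0 \<Longrightarrow> y \<noteq> 0 \<Longrightarrow> v (x * y) = v x + v y"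
    "\<And>x y. x \<in> K \<Longrightarrow> y \<in> K \<Longrightarrow> x \<noteq> 0 \<Longrightarrow> y \<noteq> 0 \<Longrightarrow> x + y \<noteq> 0 \<Longrightarrow> v (x + y) \<ge> min (v x) (v y)"
proof -
  have M: "\<And>x y. x \<in> K \<Longrightarrow> y \<in> K \<Longrightarrow> x \<noteq> 0 \<Longrightarrow> y \<noteq> 0 \<Longrightarrow> v (x * y) = v x + v y"
    using dv by (auto simp: discrete_val_def)
  show "\<And>x y. x \<in> K \<Longrightarrow> y \<in> K \<Longrightarrow> x \<noteq> 0 \<Longrightarrow> y \<noteq> 0 \<Longrightarrow> v (x * y) = v x + v y" by (rule M)
  show "\<And>x y. x \<in> K \<Longrightarrow> y \<in> K \<Longrightarrow> x \<noteq> 0 \<Longrightarrow> y \<noteq> 0 \<Longrightarrow> x + y \<noteq> 0 \<Longrightarrow> v (x + y) \<ge> min (v x) (v y)"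
    using dv by (auto simp: discrete_val_def)
  have K1: "1 \<in> K" using sK unfolding subfield_def by simp
  have Km: "-1 \<in> K" using sK unfolding subfield_def by (metis diff_0)
  have "v (1 * 1) = v 1 + v 1" using M[OF K1 K1] by simp
  then show v1: "v 1 = 0" by simp
  have "v ((-1) * (-1)) = v (-1) + v (-1)" using M[OF Km Km] by simp
  then show "v (-1) = 0" using v1 by simp
qed

lemma good_red_part:
  fixes K :: "'l::field set" and t :: 'l
  assumes sK: "subfield K" and tK: "t \<in> K" and t0: "t \<noteq> 0"
    and fp: "finite_place K t v" and na: "\<not> above_t t v"
    and phi: "\<And>n. phi n = (-1) ^ (r - 1) * tw_prod q a r n"
    and a: "\<And>u. a u = (- t) powi k u" and q0: "q > 0"
  shows "good_reduction K q r phi v"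
proof -
  have dv: "discrete_val K v" using fp by (simp add: finite_place_def)
  note B = dv_basic[OF dv sK]
  have vt: "v t = 0" using fp na by (simp add: finite_place_def above_t_def)
  have cK: "closR K" using subfield_closR[OF sK] .
  define S where "S = {x \<in> K. x = 0 \<or> v x \<ge> 0}"
  have m1K: "-1 \<in> K" using cK unfolding closR_def by blast
  have cS: "closR S"
    unfolding closR_def
  proof (intro conjI ballI)
    show "0 \<in> S" using cK by (simp add: S_def closR_def)
    show "1 \<in> S" using cK B(1) by (simp add: S_def closR_def)
    fix x y assume x: "x \<in> S" and y: "y \<in> S"
    have xK: "x \<in> K" and yK: "y \<in> K" using x y by (auto simp: S_def)
    show "x + y \<in> S"
    proof (cases "x = 0 \<or> y = 0 \<or> x + y = 0")
      case True then show ?thesis using x y cK xK yK by (auto simp: S_def closR_def)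
    next
      case False
      then have "v (x + y) \<ge> min (v x) (v y)" using B(4)[OF xK yK] by auto
      then show ?thesis using False x y cK xK yK by (auto simp: S_def closR_def)
    qed
    show "x * y \<in> S"
    proof (cases "x = 0 \<or> y = 0")
      case True then show ?thesis using x y cK xK yK by (auto simp: S_def closR_def)
    next
      case False
      then have "v (x * y) = v x + v y" using B(3)[OF xK yK] by auto
      then show ?thesis using False x y cK xK yK by (auto simp: S_def closR_def)
    qed
    show "- x \<in> S"
    proof (cases "x = 0")
      case True then show ?thesis using cK by (auto simp: S_def closR_def)
    next
      case False
      then have "v ((-1) * x) = v (-1) + v x" using B(3)[OF m1K xK] by auto
      then show ?thesis using False x cK xK B(2) by (auto simp: S_def closR_def)
    qed
  qed
  have vpow: "v (x ^ n) = 0" if "x \<in> K" "x \<noteq> 0" "v x = 0" for x n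
    using that
  proof (induction n)
    case 0 then show ?case using B(1) by simp
  next
    case (Suc n)
    have "x ^ n \<in> K" using closR_pow[OF cK Suc.prems(1)] .
    then show ?case using Suc B(3)[of x "x ^ n"] by simp
  qed
  have vinv: "v (inverse x) = 0" if "x \<in> K" "x \<noteq> 0" "v x = 0" for x
  proof -
    have iK: "inverse x \<in> K" using sK that by (simp add: subfield_def)
    have "v (x * inverse x) = v x + v (inverse x)" using B(3)[OF that(1) iK] that by simp
    then show ?thesis using that B(1) by simp
  qed
  have mtK: "- t \<in> K" using cK tK unfolding closR_def by blast
  have vmt: "v (- t) = 0"
    using B(3)[OF m1K tK] t0 B(2) vt by simp
  have aS: "a u \<in> S" for u
  proof -
    have iK: "inverse (- t) \<in> K" using sK mtK t0 unfolding subfield_def by (metis neg_equal_0_iff_equal)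
    have "v (inverse (- t)) = 0" using vinv[OF mtK _ vmt] t0 by simp
    then have "v ((inverse (- t)) ^ n) = 0" for n using vpow[OF iK] t0 by simp
    moreover have "v ((- t) ^ n) = 0" for n using vpow[OF mtK _ vmt] t0 by simp
    moreover have "a u \<in> K" unfolding a by (rule subfield_powi[OF sK mtK])
    ultimately show ?thesis unfolding S_def a by (auto simp: power_int_def)
  qed
  have phiS: "phi j \<in> S" for j
  proof -
    have T: "tw_prod q a r j \<in> S" using tw_prod_in[OF cS, of a] aS by blast
    have "-1 \<in> S" using cS unfolding closR_def by blast
    then have "(-1) ^ (r - 1) \<in> S" using closR_pow[OF cS] by blast
    then show ?thesis unfolding phi using T cS unfolding closR_def by blast
  qed
  have top: "phi r = (-1) ^ (r - 1)"
    unfolding phi using tw_prod_top[OF q0, of a r] by simp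
  have vtop: "v (phi r) = 0" unfolding top using vpow[OF m1K _ B(2)] by simp
  have "1 \<in> K" using cK by (simp add: closR_def)
  moreover have "\<forall>j\<in>{1..r}. integral_at v (1 * phi j * (inverse 1) ^ (q ^ j))"
    using phiS by (auto simp: S_def integral_at_def)
  moreover have "unit_at v (1 * phi r * (inverse 1) ^ (q ^ r))"
    using vtop top by (simp add: unit_at_def)
  ultimately show ?thesis unfolding good_reduction_def
    by (intro bexI[of _ 1]) auto
qed


theorem proposition5p14:
  fixes K :: "'l::field set" and t :: 'l and p q r :: nat and i m :: "nat \<Rightarrow> int"
  assumes "function_field_setting K t p q"
    and "r \<ge> 1"
    and "(\<Sum>s=1..r. i s) = 1"
    and "(\<Sum>s=1..r. m s) = 0"
  shows "drinfeld_module K t r (phi_m q t r i m) \<and>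
         in_D K t q r (phi_m q t r i m) \<and>
         upper_tri_rep K t q r (phi_m q t r i m) i"
proof -
  obtain n where pp: "prime p" and n: "n \<ge> 1" "q = p ^ n" and ch: "CHAR('l) = p"
    and ac: "alg_closed TYPE('l)" and sK: "subfield K" and FK: "Fq q \<subseteq> K" and tK: "t \<in> K"
    and tr: "\<And>f. (\<forall>j. coeff f j \<in> Fq q) \<and> poly f t = 0 \<longrightarrow> f = 0"
    using assms(1) unfolding function_field_setting_def by blast
  have p2: "p \<ge> 2" using pp by (rule prime_ge_2_nat)
  have "p ^ 1 \<le> p ^ n" using n(1) p2 by (intro power_increasing) auto
  then have q1: "q > 1" using n(2) p2 by simp
  have F: "frobq q TYPE('l)"
    unfolding frobq_def using q1 freshmans_dream'[of q n] pp ch n(2) by auto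
  have t0: "t \<noteq> 0"
  proof
    assume t: "t = 0"
    have "\<forall>j. coeff [:0, 1::'l:] j \<in> Fq q"
    proof
      fix j show "coeff [:0, 1::'l:] j \<in> Fq q"
        using Fq_0[OF F] Fq_1[of q] by (cases j) (auto simp: coeff_pCons split: nat.splits)
    qed
    moreover have "poly [:0, 1::'l:] t = 0" using t by simp
    ultimately have "[:0, 1::'l:] = 0" using tr by blast
    then show False by simp
  qed
  define a where "a u = (- t) powi (i u + m u * (int q - 1))" for u
  define phi where "phi = phi_m q t r i m"
  have phi: "phi n = (-1) ^ (r - 1) * tw_prod q a r n" for n
    unfolding phi_def phi_m_def a_def by simp
  have cK: "closR K" by (rule subfield_closR[OF sK])
  have mtK: "- t \<in> K" using cK tK unfolding closR_def by blast
  have aK: "a u \<in> K" for u unfolding a_def by (rule subfield_powi[OF sK mtK])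
  have phiK: "phi j \<in> K" for j
  proof -
    have T: "tw_prod q a r j \<in> K" using tw_prod_in[OF cK, of a] aK by blast
    have "-1 \<in> K" using cK unfolding closR_def by blast
    then have "(-1) ^ (r - 1) \<in> K" using closR_pow[OF cK] by blast
    then show ?thesis unfolding phi using T cK unfolding closR_def by blast
  qed
  have phi0: "phi 0 = t"
  proof -
    have "phi 0 = (-1) ^ (r - 1) * ((-1) ^ r * (\<Prod>u=1..r. a u))"
      unfolding phi tw_prod_zero prod_uminus by simp
    also have "(\<Prod>u=1..r. a u) = (- t) powi (\<Sum>u=1..r. i u + m u * (int q - 1))"
      unfolding a_def by (rule prod_powi) (use t0 in simp)
    also have "(\<Sum>u=1..r. i u + m u * (int q - 1)) = 1"
      using assms(3,4) by (simp add: sum.distrib sum_distrib_right[symmetric])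
    also have "(-1::'l) ^ (r - 1) * ((-1) ^ r * (- t) powi 1) = (-1) ^ (r - 1 + r) * (- t)"
      by (simp add: power_add)
    also have "(-1::'l) ^ (r - 1 + r) = -1"
      using assms(2) by (simp add: neg_one_odd_power)
    finally show ?thesis by simp
  qed
  have dm: "drinfeld_module K t r phi"
    unfolding drinfeld_module_def
    using phiK phi0 tw_prod_top[of q a r] tw_prod_high[of q r _ a] q1 by (simp add: phi)
  have d1: "D1 K t q r phi"
    unfolding D1_def
    using good_red_part[OF sK tK t0 _ _ phi a_def] q1 by auto
  have utr: "upper_tri_rep K t q r phi d" if "\<forall>s\<in>{1..r}. \<exists>k. d s = i s + (int q - 1) * k" for d
    by (rule utr_general[OF sK FK tK t0 ac F q1 phi a_def that])
  have "upper_tri_rep K t q r phi i" using utr[of i] by (intro utr) (auto intro: exI[of _ 0])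
  moreover have "D2 K t q r phi"
    unfolding D2_def
  proof (intro exI conjI)
    let ?j = "\<lambda>s. nat (i s mod (int q - 1))"
    show "\<forall>s\<in>{1..r}. ?j s \<le> q - 1"
    proof
      fix s
      have "i s mod (int q - 1) < int q - 1" using q1 by (intro pos_mod_bound) simp
      moreover have "int (q - 1) = int q - 1" using q1 by (simp add: of_nat_diff)
      ultimately have "i s mod (int q - 1) \<le> int (q - 1)" by linarith
      then show "?j s \<le> q - 1" by (simp add: nat_le_iff)
    qed
    show "upper_tri_rep K t q r phi (\<lambda>s. int (?j s))"
    proof (rule utr, intro ballI exI)
      fix s
      show "int (?j s) = i s + (int q - 1) * (- (i s div (int q - 1)))"
      proof -
        have m0: "0 \<le> i s mod (int q - 1)" using q1 by simp
        have "i s div (int q - 1) * (int q - 1) + i s mod (int q - 1) = i s" by (rule div_mult_mod_eq)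
        then show ?thesis using m0 by (simp add: algebra_simps)
      qed
    qed
  qed
  ultimately show ?thesis using dm d1 unfolding in_D_def phi_def by blast
qed

end
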